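(* Let $k$ be a finite field of characteristic two and $(V,q)$ a quadratic space over $k$ with $\dim_k V=2n$ and $n\ge4$. Then the exact sequences $0\to\widehat V\to\mathrm{APs}_k(V)\to\mathrm{Sp}_k(V,\omega_q)\to1$, $0\to\widehat V\to\mathrm{Ps}_k(V,q)\to O_k(V,q)\to1$, $0\to\widehat V\to\widehat V\#_\theta\Omega_k(V,q)\to\Omega_k(V,q)\to1$ do not split.
   Context: $V$ is a finite-dimensional $k$-vector space with a quadratic form $q:V\to k$ whose polar form $B_q(v,w)=q(v+w)-q(v)-q(w)$ is non-degenerate. Let $\mathrm{Tr}:k\to\mathbb F_2$ be the absolute trace, $\omega_q(v,w)=(-1)^{\mathrm{Tr}(B_q(v,w))}$, and $\widehat V=\mathrm{Hom}(V,\mathbb C^* )$ the character group of the additive group $V$. $\mathrm{Sp}_k(V,\omega_q)=\mathrm{Sp}_k(V)$ is the group of $k$-linear automorphisms preserving $B_q$, $O_k(V,q)\le\mathrm{Sp}_k(V)$ those preserving $q$, and $\Omega_k(V,q)$ the index-$2$ subgroup of $O_k(V,q)$ of elements with Dickson invariant zero. Fix a normalized 2-cocycle $\alpha:V\times V\to\mathbb C^*$ with $\alpha(v,w)/\alpha(w,v)=\omega_q(v,w)$ and let $\mathbb C_\alpha[V]$ be the twisted group algebra (basis $u_v$, $u_vu_w=\alpha(v,w)u_{v+w}$). $\mathrm{APs}_k(V)$ (the linear affine pseudo-symplectic group, a crossed product $\widehat V\#_\theta\mathrm{Sp}_k(V)$) is the group under composition of all $\mathbb C$-algebra automorphisms $\varphi$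 of $\mathbb C_\alpha[V]$ for which there is $g\in\mathrm{Sp}_k(V)$ with $\varphi(u_v)\in\mathbb C^*u_{g(v)}$ for all $v\in V$; the map $\varphi\mapsto g$ is a surjection onto $\mathrm{Sp}_k(V)$ whose kernel is the group of automorphisms $u_v\mapsto\chi(v)u_v$, $\chi\in\widehat V$, identified with $\widehat V$. $\mathrm{Ps}_k(V,q)$ (the linear pseudo-symplectic group $\widehat V\#_\theta O_k(V,q)$) is the preimage of $O_k(V,q)$ in $\mathrm{APs}_k(V)$, and $\widehat V\#_\theta\Omega_k(V,q)$ is the preimage of $\Omega_k(V,q)$. The maps in the sequences are these inclusions and projections. *)

theory Defs
  imports "HOL-Analysis.Analysis"
begin

text \<open>Vector space V = k^I (type 'k ^ 'i), quadratic forms, symplectic / orthogonal groups.\<close>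

definition polar :: "('k::field ^ 'i \<Rightarrow> 'k) \<Rightarrow> 'k ^ 'i \<Rightarrow> 'k ^ 'i \<Rightarrow> 'k" where
  "polar q v w = q (v + w) - q v - q w"

definition is_quadratic_form :: "('k::field ^ 'i::finite \<Rightarrow> 'k) \<Rightarrow> bool" where
  "is_quadratic_form q \<longleftrightarrow>
     (\<forall>c v. q (c *s v) = c^2 * q v) \<and>
     (\<forall>v. Vector_Spaces.linear (*s) (*) (\<lambda>w. polar q v w)) \<and>
     (\<forall>w. Vector_Spaces.linear (*s) (*) (\<lambda>v. polar q v w))"

definition nondegenerate_polar :: "('k::field ^ 'i::finite \<Rightarrow> 'k) \<Rightarrow> bool" where
  "nondegenerate_polar q \<longleftrightarrow> (\<forall>v. (\<forall>w. polar q v w = 0) \<longrightarrow> v = 0)"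

text \<open>Absolute trace k \<rightarrow> F_2 for a finite field of order 2^m: x + x^2 + ... + x^(2^(m-1)).
  Its value lies in the prime field {0,1}.\<close>
definition abs_trace :: "'k::{field,finite} \<Rightarrow> 'k" where
  "abs_trace x = (\<Sum>i < (THE m. CARD('k) = 2 ^ m). x ^ (2 ^ i))"

definition omega_q :: "('k::{field,finite} ^ 'i::finite \<Rightarrow> 'k) \<Rightarrow> 'k ^ 'i \<Rightarrow> 'k ^ 'i \<Rightarrow> complex" where
  "omega_q q v w = (if abs_trace (polar q v w) = 0 then 1 else -1)"

definition Sp_group :: "('k::field ^ 'i::finite \<Rightarrow> 'k) \<Rightarrow> ('k ^ 'i \<Rightarrow> 'k ^ 'i) set" where
  "Sp_group q = {g. Vector_Spaces.linear (*s) (*s) g \<and> bij g \<and>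
                    (\<forall>v w. polar q (g v) (g w) = polar q v w)}"

definition O_group :: "('k::field ^ 'i::finite \<Rightarrow> 'k) \<Rightarrow> ('k ^ 'i \<Rightarrow> 'k ^ 'i) set" where
  "O_group q = {g \<in> Sp_group q. \<forall>v. q (g v) = q v}"

text \<open>Dickson invariant (characteristic 2): rank of (g - id) modulo 2.\<close>
definition dickson_invariant :: "('k::field ^ 'i::finite \<Rightarrow> 'k ^ 'i) \<Rightarrow> nat" where
  "dickson_invariant g = vec.dim (range (\<lambda>v. g v - v)) mod 2"

definition Omega_group :: "('k::field ^ 'i::finite \<Rightarrow> 'k) \<Rightarrow> ('k ^ 'i \<Rightarrow> 'k ^ 'i) set" where
  "Omega_group q = {g \<in> O_group q. dickson_invariant g = 0}"

text \<open>Twisted group algebra C_alpha[V]: functions V \<Rightarrow> complex (V finite), basis u_v.\<close>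

definition normalized_2cocycle :: "('v::ab_group_add \<Rightarrow> 'v \<Rightarrow> complex) \<Rightarrow> bool" where
  "normalized_2cocycle \<alpha> \<longleftrightarrow>
     (\<forall>v w. \<alpha> v w \<noteq> 0) \<and> (\<forall>v. \<alpha> 0 v = 1 \<and> \<alpha> v 0 = 1) \<and>
     (\<forall>u v w. \<alpha> u v * \<alpha> (u + v) w = \<alpha> v w * \<alpha> u (v + w))"

definition tw_basis :: "'v \<Rightarrow> ('v \<Rightarrow> complex)" where
  "tw_basis v = (\<lambda>w. if w = v then 1 else 0)"

definition tw_mult :: "('v::{ab_group_add,finite} \<Rightarrow> 'v \<Rightarrow> complex) \<Rightarrow>
     ('v \<Rightarrow> complex) \<Rightarrow> ('v \<Rightarrow> complex) \<Rightarrow> ('v \<Rightarrow> complex)" where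
  "tw_mult \<alpha> f g = (\<lambda>z. \<Sum>v\<in>UNIV. \<alpha> v (z - v) * f v * g (z - v))"

definition tw_algebra_aut :: "('v::{ab_group_add,finite} \<Rightarrow> 'v \<Rightarrow> complex) \<Rightarrow>
     (('v \<Rightarrow> complex) \<Rightarrow> ('v \<Rightarrow> complex)) \<Rightarrow> bool" where
  "tw_algebra_aut \<alpha> \<phi> \<longleftrightarrow> bij \<phi> \<and>
     (\<forall>f g. \<phi> (\<lambda>x. f x + g x) = (\<lambda>x. \<phi> f x + \<phi> g x)) \<and>
     (\<forall>c f. \<phi> (\<lambda>x. c * f x) = (\<lambda>x. c * \<phi> f x)) \<and>
     (\<forall>f g. \<phi> (tw_mult \<alpha> f g) = tw_mult \<alpha> (\<phi> f) (\<phi> g)) \<and>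
     \<phi> (tw_basis 0) = tw_basis 0"

text \<open>phi lies over g: phi(u_v) \<in> C^* u_{g v} for all v.\<close>
definition lies_over :: "(('v \<Rightarrow> complex) \<Rightarrow> ('v \<Rightarrow> complex)) \<Rightarrow> ('v \<Rightarrow> 'v) \<Rightarrow> bool" where
  "lies_over \<phi> g \<longleftrightarrow> (\<forall>v. \<exists>c. c \<noteq> 0 \<and> \<phi> (tw_basis v) = (\<lambda>x. c * tw_basis (g v) x))"

definition APs :: "('k::{field,finite} ^ 'i::finite \<Rightarrow> 'k) \<Rightarrow> ('k ^ 'i \<Rightarrow> 'k ^ 'i \<Rightarrow> complex) \<Rightarrow>
     ((('k ^ 'i) \<Rightarrow> complex) \<Rightarrow> (('k ^ 'i) \<Rightarrow> complex)) set" where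
  "APs q \<alpha> = {\<phi>. tw_algebra_aut \<alpha> \<phi> \<and> (\<exists>g \<in> Sp_group q. lies_over \<phi> g)}"

text \<open>The extension  0 \<rightarrow> V^ \<rightarrow> (preimage of G in APs) \<rightarrow> G \<rightarrow> 1  splits iff there is a group
  homomorphism section s : G \<rightarrow> APs with projection(s g) = g.\<close>
definition ext_splits :: "('k::{field,finite} ^ 'i::finite \<Rightarrow> 'k) \<Rightarrow> ('k ^ 'i \<Rightarrow> 'k ^ 'i \<Rightarrow> complex) \<Rightarrow>
     ('k ^ 'i \<Rightarrow> 'k ^ 'i) set \<Rightarrow> bool" where
  "ext_splits q \<alpha> G \<longleftrightarrow> (\<exists>s. (\<forall>g\<in>G. s g \<in> APs q \<alpha> \<and> lies_over (s g) g) \<and>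
                              (\<forall>g\<in>G. \<forall>h\<in>G. s (g \<circ> h) = s g \<circ> s h))"

end

theory Submission
  imports Defs "HOL-Computational_Algebra.Polynomial"
begin


locale QS =
  fixes q :: "'k::{field,finite} ^ 'i::finite \<Rightarrow> 'k"
  assumes char2: "CHAR('k) = 2" and qf: "is_quadratic_form q" and nd: "nondegenerate_polar q"
begin

abbreviation B where "B \<equiv> polar q"

lemma two0: "(2::'k) = 0"
  using of_nat_CHAR[where 'a='k] char2 by simp

lemma kadd_self[simp]: "(x::'k) + x = 0"
  by (metis mult_2 two0 mult_zero_left)

lemma kminus[simp]: "- (x::'k) = x"
  by (metis add_eq_0_iff kadd_self)

lemma kdiff[simp]: "(x::'k) - y = x + y"
  by (metis diff_conv_add_uminus kminus)

lemma vadd_self[simp]: "(v::'k^'i) + v = 0"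
  by (simp add: vec_eq_iff two0)

lemma vminus[simp]: "- (v::'k^'i) = v"
  by (metis add_eq_0_iff vadd_self)

lemma vdiff[simp]: "(v::'k^'i) - w = v + w"
  by (metis diff_conv_add_uminus vminus)

lemma q_scale: "q (c *s v) = c^2 * q v"
  using qf unfolding is_quadratic_form_def by blast

lemma q0[simp]: "q 0 = 0"
  using q_scale[of 0 0] by simp

lemma linL: "Vector_Spaces.linear (*s) (*) (\<lambda>v. B v w)"
  using qf unfolding is_quadratic_form_def by blast
lemma linR: "Vector_Spaces.linear (*s) (*) (\<lambda>w. B v w)"
  using qf unfolding is_quadratic_form_def by blast

lemma B_addL: "B (a + b) w = B a w + B b w"
  using linL[of w] unfolding Vector_Spaces.linear_iff by blast
lemma B_scaleL: "B (c *s a) w = c * B a w"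
  using linL[of w] unfolding Vector_Spaces.linear_iff by blast
lemma B_addR: "B v (a + b) = B v a + B v b"
  using linR[of v] unfolding Vector_Spaces.linear_iff by blast
lemma B_scaleR: "B v (c *s a) = c * B v a"
  using linR[of v] unfolding Vector_Spaces.linear_iff by blast
lemma B_sym: "B v w = B w v"
  unfolding polar_def by (simp add: add.commute)
lemma B_self[simp]: "B v v = 0"
  unfolding polar_def by simp
lemma B_0L[simp]: "B 0 w = 0" using B_scaleL[of 0 0 w] by simp
lemma B_0R[simp]: "B w 0 = 0" using B_scaleR[of w 0 0] by simp

lemma q_add: "q (v + w) = q v + q w + B v w"
  unfolding polar_def by (simp add: two0)

end



lemma char2_add_self:
  assumes "CHAR('k::field) = 2" shows "(x::'k) + x = 0"
proof -
  have "(2::'k) = 0" using of_nat_CHAR[where 'a='k] assms by simp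
  then show ?thesis by (metis mult_2 mult_zero_left)
qed

lemma card_pow2_aux:
  assumes char: "CHAR('k::{field,finite}) = 2"
  shows "0 \<in> S \<Longrightarrow> (\<forall>a\<in>S. \<forall>b\<in>S. a+b\<in>S) \<Longrightarrow> \<exists>m. CARD('k) = card (S::'k set) * 2^m"
proof (induction "card (UNIV - S)" arbitrary: S rule: less_induct)
  case less
  note as = char2_add_self[OF char]
  show ?case
  proof (cases "S = UNIV")
    case True then show ?thesis by (intro exI[of _ 0]) simp
  next
    case False
    then obtain a where a: "a \<notin> S" by auto
    define S' where "S' = S \<union> (\<lambda>x. a + x) ` S"
    have cl: "\<forall>x\<in>S'. \<forall>y\<in>S'. x + y \<in> S'"
    proof (intro ballI)
      fix x y assume "x \<in> S'" "y \<in> S'"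
      then consider "x \<in> S" "y \<in> S" | s where "x \<in> S" "y = a + s" "s \<in> S"
        | s where "y \<in> S" "x = a + s" "s \<in> S" | s t where "x = a + s" "y = a + t" "s \<in> S" "t \<in> S"
        unfolding S'_def by auto
      then show "x + y \<in> S'"
      proof cases
        case 1 then show ?thesis using less.prems unfolding S'_def by auto
      next
        case 2
        then have "x + y = a + (x + s)" by (simp add: algebra_simps)
        then show ?thesis using 2 less.prems unfolding S'_def by auto
      next
        case 3
        then have "x + y = a + (s + y)" by (simp add: algebra_simps)
        then show ?thesis using 3 less.prems unfolding S'_def by auto
      next
        case 4
        then have "x + y = (a + a) + (s + t)" by (simp add: algebra_simps)
        then have "x + y = s + t" using as[of a] by simp
        then show ?thesis using 4 less.prems unfolding S'_def by auto
      qed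
    qed
    have disj: "S \<inter> (\<lambda>x. a + x) ` S = {}"
    proof (rule ccontr)
      assume "S \<inter> (\<lambda>x. a + x) ` S \<noteq> {}"
      then obtain s t where st: "s \<in> S" "t \<in> S" "s = a + t" by auto
      then have "s + t = a + (t + t)" by (simp add: algebra_simps)
      then have "a = s + t" using as[of t] by simp
      moreover have "s + t \<in> S" using st less.prems by blast
      ultimately show False using a by simp
    qed
    have cS': "card S' = 2 * card S"
      unfolding S'_def
      by (subst card_Un_disjoint) (auto simp: disj card_image inj_on_def)
    have "a \<in> S'" unfolding S'_def using less.prems by force
    then have "card (UNIV - S') < card (UNIV - S)"
      using a unfolding S'_def by (intro psubset_card_mono) auto
    moreover have "0 \<in> S'" unfolding S'_def using less.prems by auto
    ultimately obtain m where "CARD('k) = card S' * 2^m"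
      using less.hyps[of S'] cl by blast
    then show ?thesis using cS' by (intro exI[of _ "Suc m"]) simp
  qed
qed

lemma card_pow2:
  assumes char: "CHAR('k::{field,finite}) = 2"
  shows "\<exists>m. CARD('k) = 2^m"
  using card_pow2_aux[OF char, of "{0}"] by simp

lemma abs_trace_nonzero:
  assumes char: "CHAR('k::{field,finite}) = 2"
  shows "\<exists>s::'k. abs_trace s \<noteq> 0"
proof -
  obtain m where m: "CARD('k) = 2^m" using card_pow2[OF char] by blast
  have the: "(THE m. CARD('k) = 2 ^ m) = m"
    by (rule the_equality) (use m in auto)
  have "CARD('k) \<ge> 2"
  proof -
    have "{0::'k, 1} \<subseteq> UNIV" by simp
    then have "card {0::'k,1} \<le> CARD('k)" by (intro card_mono) auto
    then show ?thesis by simp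
  qed
  then have m1: "m \<ge> 1" using m by (cases m) auto
  define P :: "'k poly" where "P = (\<Sum>i<m. monom 1 (2^i))"
  have polyP: "poly P x = abs_trace x" for x
    unfolding P_def abs_trace_def the by (simp add: poly_sum poly_monom)
  have coeffP: "coeff P (2^(m-1)) = 1"
  proof -
    have "coeff P (2^(m-1)) = (\<Sum>i<m. if 2^i = (2::nat)^(m-1) then 1 else 0)"
      unfolding P_def by (simp add: coeff_sum coeff_monom)
    also have "\<dots> = (\<Sum>i\<in>{m-1}. 1)"
      by (rule sum.mono_neutral_cong_right) (use m1 in auto)
    finally show ?thesis by simp
  qed
  then have P0: "P \<noteq> 0" by auto
  have "degree P \<le> 2^(m-1)"
    unfolding P_def
  proof (rule degree_sum_le)
    fix i assume "i \<in> {..<m}"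
    then have "(2::nat)^i \<le> 2^(m-1)" by (intro power_increasing) auto
    then show "degree (monom (1::'k) (2^i)) \<le> 2^(m-1)" by (simp add: degree_monom_eq)
  qed simp
  moreover have "(2::nat)^(m-1) < 2^m" using m1 by (intro power_strict_increasing) auto
  ultimately have "card {x. poly P x = 0} < CARD('k)"
    using card_poly_roots_bound[OF P0] m by linarith
  then have "{x. poly P x = 0} \<noteq> UNIV" by auto
  then show ?thesis using polyP by auto
qed

lemma sq_surj:
  assumes char: "CHAR('k::{field,finite}) = 2"
  shows "\<exists>r::'k. r^2 = s"
proof -
  have "inj (\<lambda>r::'k. r^2)"
  proof (rule injI)
    fix x y :: 'k assume "x^2 = y^2"
    have "(x + y)^2 = x^2 + y^2 + 2*x*y" by (simp add: power2_sum)
    also have "(2::'k) = 0" using of_nat_CHAR[where 'a='k] char by simp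
    finally have "(x + y)^2 = x^2 + y^2" by simp
    also have "\<dots> = 0" using \<open>x^2 = y^2\<close> char2_add_self[OF char] by simp
    finally have "(x + y)^2 = 0" .
    then have "x + y = 0" by simp
    then show "x = y" using char2_add_self[OF char, of y] by (metis add_right_cancel)
  qed
  then have "surj (\<lambda>r::'k. r^2)" using finite_UNIV_inj_surj[of "\<lambda>r::'k. r^2"] by simp
  then show ?thesis by (metis surjD)
qed




abbreviation sc :: "complex \<Rightarrow> ('v \<Rightarrow> complex) \<Rightarrow> ('v \<Rightarrow> complex)" where
  "sc c f \<equiv> (\<lambda>x. c * f x)"

lemma tw_mult_basis:
  fixes \<alpha> :: "'v::{ab_group_add,finite} \<Rightarrow> 'v \<Rightarrow> complex"
  shows "tw_mult \<alpha> (tw_basis a) (tw_basis b) = sc (\<alpha> a b) (tw_basis (a+b))"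
proof
  fix z
  have "tw_mult \<alpha> (tw_basis a) (tw_basis b) z
      = (\<Sum>v\<in>UNIV. if v = a then \<alpha> a (z - a) * tw_basis b (z - a) else 0)"
    unfolding tw_mult_def by (intro sum.cong) (auto simp: tw_basis_def)
  also have "\<dots> = \<alpha> a (z - a) * tw_basis b (z - a)" by simp
  also have "\<dots> = \<alpha> a b * tw_basis (a+b) z"
    by (auto simp: tw_basis_def algebra_simps)
  finally show "tw_mult \<alpha> (tw_basis a) (tw_basis b) z = \<alpha> a b * tw_basis (a+b) z" .
qed

lemma tw_mult_sc:
  "tw_mult \<alpha> (sc c f) (sc d g) = sc (c * d) (tw_mult \<alpha> f g)"
  unfolding tw_mult_def by (auto simp: sum_distrib_left algebra_simps)

lemma aut_sc: "tw_algebra_aut \<alpha> \<phi> \<Longrightarrow> \<phi> (sc c f) = sc c (\<phi> f)"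
  unfolding tw_algebra_aut_def by blast
lemma aut_mult: "tw_algebra_aut \<alpha> \<phi> \<Longrightarrow> \<phi> (tw_mult \<alpha> f g) = tw_mult \<alpha> (\<phi> f) (\<phi> g)"
  unfolding tw_algebra_aut_def by blast
lemma aut_one: "tw_algebra_aut \<alpha> \<phi> \<Longrightarrow> \<phi> (tw_basis 0) = tw_basis 0"
  unfolding tw_algebra_aut_def by blast

lemma key_lift:
  fixes \<alpha> :: "'v::{ab_group_add,finite} \<Rightarrow> 'v \<Rightarrow> complex"
  assumes vv: "\<And>v::'v. v + v = 0" and coc: "normalized_2cocycle \<alpha>"
    and aut: "tw_algebra_aut \<alpha> \<phi>" and lo: "lies_over \<phi> h" and inv: "\<And>f. \<phi> (\<phi> f) = f"
    and hp: "h p = p" and hw: "h w = w + p" and hwp: "h (w + p) = w"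
  shows "\<phi> (tw_basis p) = sc (\<alpha> w p / \<alpha> p w) (tw_basis p)"
proof -
  let ?e = "tw_basis :: 'v \<Rightarrow> 'v \<Rightarrow> complex"
  have nz: "\<alpha> a b \<noteq> 0" for a b using coc unfolding normalized_2cocycle_def by blast
  have a0: "\<alpha> 0 a = 1" "\<alpha> a 0 = 1" for a using coc unfolding normalized_2cocycle_def by blast+
  have C: "\<alpha> u v * \<alpha> (u + v) x = \<alpha> v x * \<alpha> u (v + x)" for u v x
    using coc unfolding normalized_2cocycle_def by blast
  obtain c0 where c0: "c0 \<noteq> 0" "\<phi> (?e p) = sc c0 (?e p)"
    using lo hp unfolding lies_over_def by metis
  obtain c where c: "\<phi> (?e w) = sc c (?e (w + p))"
    using lo hw unfolding lies_over_def by metis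
  obtain c' where c': "\<phi> (?e (w + p)) = sc c' (?e w)"
    using lo hwp unfolding lies_over_def by metis
  have wpp: "w + p + p = w" by (metis add.assoc add_0_right vv)
  have ev: "?e a a = 1" for a by (simp add: tw_basis_def)
  \<comment> \<open>E1\<close>
  have "\<phi> (tw_mult \<alpha> (?e w) (?e w)) = \<phi> (sc (\<alpha> w w) (?e 0))"
    by (simp add: tw_mult_basis vv)
  also have "\<dots> = sc (\<alpha> w w) (?e 0)" using aut_sc[OF aut] aut_one[OF aut] by simp
  finally have "tw_mult \<alpha> (sc c (?e (w + p))) (sc c (?e (w + p))) = sc (\<alpha> w w) (?e 0)"
    using aut_mult[OF aut] c by simp
  then have "sc (c * c * \<alpha> (w+p) (w+p)) (?e 0) = sc (\<alpha> w w) (?e 0)"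
    by (simp add: tw_mult_sc tw_mult_basis vv mult.assoc)
  then have E1: "c * c * \<alpha> (w+p) (w+p) = \<alpha> w w"
    by (metis ev mult.right_neutral)
  \<comment> \<open>E2\<close>
  have "\<phi> (tw_mult \<alpha> (?e w) (?e p)) = \<phi> (sc (\<alpha> w p) (?e (w + p)))"
    by (simp add: tw_mult_basis)
  also have "\<dots> = sc (\<alpha> w p * c') (?e w)" using aut_sc[OF aut] c' by (simp add: mult.assoc)
  finally have "tw_mult \<alpha> (sc c (?e (w + p))) (sc c0 (?e p)) = sc (\<alpha> w p * c') (?e w)"
    using aut_mult[OF aut] c c0 by simp
  then have "sc (c * c0 * \<alpha> (w+p) p) (?e w) = sc (\<alpha> w p * c') (?e w)"
    by (simp add: tw_mult_sc tw_mult_basis wpp mult.assoc)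
  then have E2: "c * c0 * \<alpha> (w+p) p = \<alpha> w p * c'"
    by (metis ev mult.right_neutral)
  \<comment> \<open>E3\<close>
  have "?e w = \<phi> (\<phi> (?e w))" using inv by simp
  also have "\<dots> = sc (c * c') (?e w)" using c c' aut_sc[OF aut] by (simp add: mult.assoc)
  finally have E3: "c * c' = 1" by (metis ev mult.right_neutral)
  have C1: "\<alpha> w p * \<alpha> (w + p) p = \<alpha> p p" using C[of w p p] by (simp add: vv a0)
  have C2: "\<alpha> w p * \<alpha> (w + p) (w + p) = \<alpha> p (w + p) * \<alpha> w w"
    using C[of w p "w + p"] by (metis add.commute add.left_commute add_0_right vv)
  have C3: "\<alpha> p p = \<alpha> p w * \<alpha> p (p + w)" using C[of p p w] by (simp add: vv a0)
  have X: "\<alpha> w p = c * c * c0 * \<alpha> (w+p) p"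
  proof -
    have "\<alpha> w p = \<alpha> w p * (c * c')" using E3 by simp
    also have "\<dots> = c * (\<alpha> w p * c')" by simp
    also have "\<dots> = c * (c * c0 * \<alpha> (w+p) p)" using E2 by simp
    finally show ?thesis by simp
  qed
  have "\<alpha> p (w + p) * \<alpha> w w = \<alpha> w w * c0 * \<alpha> (w+p) p"
    using C2 X E1 by (metis mult.commute mult.left_commute)
  then have Y: "\<alpha> p (w + p) = c0 * \<alpha> (w+p) p" using nz[of w w] by (simp add: mult.commute mult.left_commute)
  have "c0 = \<alpha> w p / \<alpha> p w"
  proof -
    have "\<alpha> p p = \<alpha> p w * (c0 * \<alpha> (w+p) p)" using C3 Y by (simp add: add.commute)
    then have "\<alpha> w p * \<alpha> (w + p) p = \<alpha> p w * c0 * \<alpha> (w+p) p" using C1 by simp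
    then have "\<alpha> w p = \<alpha> p w * c0" using nz[of "w+p" p] by simp
    then show ?thesis using nz[of p w] by (simp add: field_simps)
  qed
  then show ?thesis using c0 by simp
qed




context QS begin

lemma B_sumL: "B (\<Sum>a\<in>S. f a) x = (\<Sum>a\<in>S. B (f a) x)"
  by (induct S rule: infinite_finite_induct) (auto simp: B_addL)

lemma nd': "v \<noteq> 0 \<Longrightarrow> \<exists>z. B v z \<noteq> 0"
  using nd unfolding nondegenerate_polar_def by blast

lemma step:
  fixes w y :: "nat \<Rightarrow> 'k^'i" and j :: nat
  assumes dim: "2*j < vec.dim (UNIV :: ('k^'i) set)"
   and ww: "\<forall>a<j. \<forall>b<j. B (w a) (w b) = 0" and yy: "\<forall>a<j. \<forall>b<j. B (y a) (y b) = 0"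
   and wy: "\<forall>a<j. \<forall>b<j. B (w a) (y b) = (if a = b then 1 else 0)"
  shows "\<exists>w' y'. q w' = 1 \<and> B w' y' = 1 \<and> (\<forall>a<j. B w' (w a) = 0 \<and> B w' (y a) = 0 \<and> B y' (w a) = 0 \<and> B y' (y a) = 0)"
proof -
  define \<pi> where "\<pi> z = z + (\<Sum>a<j. B z (y a) *s w a + B z (w a) *s y a)" for z
  define U where "U = {u. \<forall>a<j. B u (w a) = 0 \<and> B u (y a) = 0}"
  have p1: "B (\<pi> z) (w b) = 0" if "b < j" for z b
  proof -
    have "B (\<pi> z) (w b) = B z (w b) + (\<Sum>a<j. B z (w a) * (if b = a then 1 else 0))"
      unfolding \<pi>_def using that ww wy
      by (simp add: B_addL B_sumL B_scaleL B_sym[of "y _" "w b"])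
    also have "(\<Sum>a<j. B z (w a) * (if b = a then 1 else 0)) = B z (w b)"
      using that by (simp add: if_distrib cong: if_cong)
    finally show ?thesis by simp
  qed
  have p2: "B (\<pi> z) (y b) = 0" if "b < j" for z b
  proof -
    have "B (\<pi> z) (y b) = B z (y b) + (\<Sum>a<j. B z (y a) * (if a = b then 1 else 0))"
      unfolding \<pi>_def using that yy wy
      by (simp add: B_addL B_sumL B_scaleL)
    also have "(\<Sum>a<j. B z (y a) * (if a = b then 1 else 0)) = B z (y b)"
      using that by (simp add: if_distrib cong: if_cong)
    finally show ?thesis by simp
  qed
  have piU: "\<pi> z \<in> U" for z unfolding U_def using p1 p2 by blast
  have p3: "B u (\<pi> z) = B u z" if "u \<in> U" for u z
  proof -
    have "B (\<pi> z) u = B z u"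
      using that unfolding \<pi>_def U_def
      by (simp add: B_addL B_sumL B_scaleL B_sym[of "w _" u] B_sym[of "y _" u])
    then show ?thesis by (simp add: B_sym[of u])
  qed
  have Uadd: "u + v \<in> U" if "u \<in> U" "v \<in> U" for u v
    using that unfolding U_def by (simp add: B_addL)
  have Uscale: "c *s u \<in> U" if "u \<in> U" for u c
    using that unfolding U_def by (simp add: B_scaleL)
  \<comment> \<open>U is nonzero\<close>
  obtain z0 where z0: "\<pi> z0 \<noteq> 0"
  proof (rule ccontr)
    assume "\<not> thesis"
    then have all0: "\<pi> z = 0" for z using that by blast
    define S where "S = w ` {..<j} \<union> y ` {..<j}"
    have "z \<in> vec.span S" for z
    proof -
      have "z = \<pi> z + (\<Sum>a<j. B z (y a) *s w a + B z (w a) *s y a)"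
        unfolding \<pi>_def by (simp add: add.assoc)
      then have "z = (\<Sum>a<j. B z (y a) *s w a + B z (w a) *s y a)" using all0 by simp
      also have "\<dots> \<in> vec.span S"
        by (intro vec.span_sum vec.span_add vec.span_scale vec.span_base) (auto simp: S_def)
      finally show ?thesis .
    qed
    then have "vec.dim (UNIV :: ('k^'i) set) \<le> card S"
      by (intro vec.dim_le_card) (auto simp: S_def)
    also have "card S \<le> 2 * j"
      unfolding S_def using card_Un_le[of "w ` {..<j}" "y ` {..<j}"]
        card_image_le[of "{..<j}" w] card_image_le[of "{..<j}" y] by simp
    finally show False using dim by simp
  qed
  define u where "u = \<pi> z0"
  have uU: "u \<in> U" unfolding u_def by (rule piU)
  obtain z1 where z1: "B u z1 \<noteq> 0" using nd'[of u] z0 unfolding u_def by blast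
  define v where "v = \<pi> z1"
  have vU: "v \<in> U" unfolding v_def by (rule piU)
  have uv: "B u v \<noteq> 0" unfolding v_def using p3[OF uU] z1 by simp
  obtain a where aU: "a \<in> U" and qa: "q a \<noteq> 0"
  proof (cases "q u = 0")
    case False then show ?thesis using that uU by blast
  next
    case qu: True
    show ?thesis
    proof (cases "q v = 0")
      case False then show ?thesis using that vU by blast
    next
      case True
      then have "q (u + v) \<noteq> 0" using qu uv by (simp add: q_add)
      then show ?thesis using that Uadd[OF uU vU] by blast
    qed
  qed
  have "a \<noteq> 0" using qa by auto
  then obtain z2 where z2: "B a z2 \<noteq> 0" using nd' by blast
  define y0 where "y0 = \<pi> z2"
  have y0U: "y0 \<in> U" unfolding y0_def by (rule piU)
  have ay0: "B a y0 \<noteq> 0" unfolding y0_def using p3[OF aU] z2 by simp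
  obtain r where r: "r^2 = q a" using sq_surj[OF char2] by blast
  have r0: "r \<noteq> 0" using r qa by auto
  define w' where "w' = (1/r) *s a"
  define y' where "y' = (r / B a y0) *s y0"
  have "q w' = 1" unfolding w'_def using r r0 qa by (simp add: q_scale power_divide)
  moreover have "B w' y' = 1" unfolding w'_def y'_def using r0 ay0
    by (simp add: B_scaleL B_scaleR)
  moreover have "w' \<in> U" "y' \<in> U" unfolding w'_def y'_def using aU y0U Uscale by auto
  ultimately show ?thesis unfolding U_def by blast
qed

lemma build:
  assumes dim: "8 \<le> vec.dim (UNIV :: ('k^'i) set)"
  shows "j \<le> 4 \<Longrightarrow> \<exists>w y :: nat \<Rightarrow> 'k^'i. (\<forall>a<j. q (w a) = 1) \<and> (\<forall>a<j. \<forall>b<j. B (w a) (w b) = 0)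
     \<and> (\<forall>a<j. \<forall>b<j. B (y a) (y b) = 0) \<and> (\<forall>a<j. \<forall>b<j. B (w a) (y b) = (if a = b then 1 else 0))"
proof (induction j)
  case 0 then show ?case by simp
next
  case (Suc j)
  then obtain w y where H: "\<forall>a<j. q (w a) = 1" "\<forall>a<j. \<forall>b<j. B (w a) (w b) = 0"
     "\<forall>a<j. \<forall>b<j. B (y a) (y b) = 0" "\<forall>a<j. \<forall>b<j. B (w a) (y b) = (if a = b then 1 else 0)"
    by auto
  have "2 * j < vec.dim (UNIV :: ('k^'i) set)" using Suc.prems dim by simp
  from step[OF this H(2-4)] obtain w' y' where S: "q w' = 1" "B w' y' = 1"
    "\<forall>a<j. B w' (w a) = 0 \<and> B w' (y a) = 0 \<and> B y' (w a) = 0 \<and> B y' (y a) = 0" by blast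
  let ?w = "w(j := w')" and ?y = "y(j := y')"
  have S': "\<forall>a<j. B (w a) w' = 0 \<and> B (y a) w' = 0 \<and> B (w a) y' = 0 \<and> B (y a) y' = 0"
    using S(3) B_sym by metis
  note SS = S S'[rule_format] S(3)[rule_format]
  have 1: "\<forall>a<Suc j. q (?w a) = 1" using H S by (auto simp: less_Suc_eq)
  have 2: "\<forall>a<Suc j. \<forall>b<Suc j. B (?w a) (?w b) = 0"
      using H SS by (auto simp: less_Suc_eq)
  have 3: "\<forall>a<Suc j. \<forall>b<Suc j. B (?y a) (?y b) = 0"
      using H SS by (auto simp: less_Suc_eq)
  have 4: "\<forall>a<Suc j. \<forall>b<Suc j. B (?w a) (?y b) = (if a = b then 1 else 0)"
      using H SS by (auto simp: less_Suc_eq)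
  show ?case using 1 2 3 4 by blast
qed

end



locale QS4 = QS q for q :: "'k::{field,finite} ^ 'i::finite \<Rightarrow> 'k" +
  fixes w y :: "nat \<Rightarrow> 'k^'i"
  assumes qw: "\<forall>a<4. q (w a) = 1"
    and ww: "\<forall>a<4. \<forall>b<4. B (w a) (w b) = 0"
    and yy: "\<forall>a<4. \<forall>b<4. B (y a) (y b) = 0"
    and wy: "\<forall>a<4. \<forall>b<4. B (w a) (y b) = (if a = b then 1 else 0)"
begin

lemma ww'[simp]: "a < 4 \<Longrightarrow> b < 4 \<Longrightarrow> B (w a) (w b) = 0" using ww by blast
lemma wy'[simp]: "a < 4 \<Longrightarrow> b < 4 \<Longrightarrow> B (w a) (y b) = (if a = b then 1 else 0)" using wy by blast
lemma yw'[simp]: "a < 4 \<Longrightarrow> b < 4 \<Longrightarrow> B (y b) (w a) = (if a = b then 1 else 0)" using wy B_sym by metis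
lemma qw'[simp]: "a < 4 \<Longrightarrow> q (w a) = 1" using qw by blast

abbreviation xi :: "nat \<Rightarrow> 'k^'i \<Rightarrow> 'k" where "xi i z \<equiv> B z (w i)"

definition L :: "(nat \<Rightarrow> nat \<Rightarrow> 'k) \<Rightarrow> nat \<Rightarrow> 'k^'i \<Rightarrow> 'k" where
  "L M j z = M 0 j * xi 0 z + M 1 j * xi 1 z + M 2 j * xi 2 z + M 3 j * xi 3 z"

definition Hm :: "(nat \<Rightarrow> nat \<Rightarrow> 'k) \<Rightarrow> 'k^'i \<Rightarrow> 'k^'i" where
  "Hm M z = z + L M 0 z *s w 0 + L M 1 z *s w 1 + L M 2 z *s w 2 + L M 3 z *s w 3"

lemma xi_Hm: "k < 4 \<Longrightarrow> xi k (Hm M z) = xi k z"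
  unfolding Hm_def by (simp add: B_addL B_scaleL)

lemma L_Hm: "L M j (Hm N z) = L M j z"
  unfolding L_def by (simp add: xi_Hm)

lemma Hm_comp: "Hm M (Hm N z) = Hm (\<lambda>i j. M i j + N i j) z"
  unfolding Hm_def[of M] L_Hm unfolding Hm_def L_def
  by (simp add: algebra_simps vector_sadd_rdistrib)

lemma L_zero: "L (\<lambda>i j. 0) j z = 0" unfolding L_def by simp

lemma Hm_invol: "Hm M (Hm M z) = z"
  unfolding Hm_comp by (simp add: Hm_def L_zero)

lemma Hm_linear: "Vector_Spaces.linear (*s) (*s) (Hm M)"
  unfolding Vector_Spaces.linear_iff
proof (intro conjI allI)
  show "vector_space ((*s) :: 'k \<Rightarrow> 'k^'i \<Rightarrow> 'k^'i)" by (rule vec.vector_space_axioms)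
  show "vector_space ((*s) :: 'k \<Rightarrow> 'k^'i \<Rightarrow> 'k^'i)" by (rule vec.vector_space_axioms)
  fix a b :: "'k^'i" and c :: 'k
  show "Hm M (a + b) = Hm M a + Hm M b"
    unfolding Hm_def L_def by (simp add: B_addL algebra_simps vector_sadd_rdistrib)
  show "Hm M (c *s a) = c *s Hm M a"
    unfolding Hm_def L_def by (simp add: B_scaleL algebra_simps vector_add_ldistrib vector_smult_assoc)
qed

lemma Hm_add: "Hm M (a + b) = Hm M a + Hm M b"
  using Hm_linear[of M] unfolding Vector_Spaces.linear_iff by blast
lemma Hm_scale: "Hm M (c *s a) = c *s Hm M a"
  using Hm_linear[of M] unfolding Vector_Spaces.linear_iff by blast

lemma Hm_bij: "bij (Hm M)"
  by (rule involuntory_imp_bij) (simp add: Hm_invol)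

lemma q_plus4:
  "q (z + a *s w 0 + b *s w 1 + c *s w 2 + d *s w 3)
   = q z + a^2 + b^2 + c^2 + d^2 + a * xi 0 z + b * xi 1 z + c * xi 2 z + d * xi 3 z"
  by (simp add: q_add q_scale B_addL B_addR B_scaleL B_scaleR B_sym[of "w _" z] algebra_simps)

lemma q_Hm: "q (Hm M z) = q z + (L M 0 z)^2 + (L M 1 z)^2 + (L M 2 z)^2 + (L M 3 z)^2
   + L M 0 z * xi 0 z + L M 1 z * xi 1 z + L M 2 z * xi 2 z + L M 3 z * xi 3 z"
  unfolding Hm_def by (rule q_plus4)

lemma polar_pres:
  assumes "\<And>z. q (g z) = q z" and "\<And>a b. g (a + b) = g a + g b"
  shows "B (g v) (g u) = B v u"
  unfolding polar_def using assms by metis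

end



lemma polyX: "(a::'k::comm_ring_1)^2 + b^2 + 0^2 + 0^2 + a * a + b * b + 0 * c + 0 * d = 2 * (a*a + b*b)"
  by (simp add: power2_eq_square algebra_simps)
lemma polyY: "((a::'k::comm_ring_1) + b + d)^2 + (a + d)^2 + c^2 + (a + b)^2 + (a + b + d) * a + (a + d) * b + c * c + (a + b) * d
   = 2 * (2 * a ^ 2 + b ^ 2 + d ^ 2 + c ^ 2 + 3 * a * b + 3 * a * d + 2 * b * d)"
  by (simp add: power2_eq_square algebra_simps)
lemma polyXY: "((b::'k::comm_ring_1) + d)^2 + (a + b + d)^2 + c^2 + (a + b)^2 + (b + d) * a + (a + b + d) * b + c * c + (a + b) * d
   = 2 * (a ^ 2 + 2 * b ^ 2 + d ^ 2 + c ^ 2 + 3 * a * b + 2 * a * d + 3 * b * d)"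
  by (simp add: power2_eq_square algebra_simps)

context QS4 begin

definition MX :: "nat \<Rightarrow> nat \<Rightarrow> 'k" where "MX i j = (if i = j \<and> i < 2 then 1 else 0)"
definition MY :: "nat \<Rightarrow> nat \<Rightarrow> 'k" where
  "MY i j = (if (i,j) \<in> {(0,0),(1,0),(3,0),(0,1),(3,1),(2,2),(0,3),(1,3)} then 1 else 0)"
definition MXY :: "nat \<Rightarrow> nat \<Rightarrow> 'k" where "MXY i j = MX i j + MY i j"

lemma LX: "L MX 0 z = xi 0 z" "L MX 1 z = xi 1 z" "L MX 2 z = 0" "L MX 3 z = 0"
  by (simp_all add: L_def MX_def)
lemma LY: "L MY 0 z = xi 0 z + xi 1 z + xi 3 z" "L MY 1 z = xi 0 z + xi 3 z"
  "L MY 2 z = xi 2 z" "L MY 3 z = xi 0 z + xi 1 z"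
  by (simp_all add: L_def MY_def)
lemma LXY: "L MXY 0 z = xi 1 z + xi 3 z" "L MXY 1 z = xi 0 z + xi 1 z + xi 3 z"
  "L MXY 2 z = xi 2 z" "L MXY 3 z = xi 0 z + xi 1 z"
  by (simp_all add: L_def MXY_def MX_def MY_def algebra_simps)

lemma qX: "q (Hm MX z) = q z"
  unfolding q_Hm LX add.assoc[symmetric] using polyX[of "xi 0 z" "xi 1 z" "xi 2 z" "xi 3 z"] two0
  by (simp add: add.assoc)
lemma qY: "q (Hm MY z) = q z"
  unfolding q_Hm LY add.assoc[symmetric] using polyY[of "xi 0 z" "xi 1 z" "xi 3 z" "xi 2 z"] two0
  by (simp add: add.assoc)
lemma qXY: "q (Hm MXY z) = q z"
  unfolding q_Hm LXY add.assoc[symmetric] using polyXY[of "xi 1 z" "xi 3 z" "xi 0 z" "xi 2 z"] two0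
  by (simp add: add.assoc)


lemma w_inj: "a < 4 \<Longrightarrow> b < 4 \<Longrightarrow> w a = w b \<Longrightarrow> a = b"
  using wy'[of a a] wy'[of b a] by (metis one_neq_zero)

lemma indep: assumes "S \<subseteq> {..<4}" shows "vec.independent (w ` S)"
proof (rule vec.independent_if_scalars_zero)
  show "finite (w ` S)" using assms finite_subset by blast
next
  fix f x assume sum: "(\<Sum>x\<in>w ` S. f x *s x) = 0" and x: "x \<in> w ` S"
  then obtain k where k: "k \<in> S" "x = w k" by blast
  have "0 = B (\<Sum>x\<in>w ` S. f x *s x) (y k)" using sum by simp
  also have "\<dots> = (\<Sum>x\<in>w ` S. f x * B x (y k))" by (simp add: B_sumL B_scaleL)
  also have "\<dots> = (\<Sum>x\<in>w ` S. if x = w k then f x else 0)"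
  proof (rule sum.cong)
    fix x assume "x \<in> w ` S"
    then obtain a where a: "a \<in> S" "x = w a" by blast
    then have "(a = k) = (w a = w k)" using w_inj assms k by blast
    moreover have "a < 4" "k < 4" using a k assms by auto
    ultimately show "f x * B x (y k) = (if x = w k then f x else 0)" using a by auto
  qed simp
  also have "\<dots> = f (w k)" using k by simp
  finally show "f x = 0" using k by simp
qed

lemma card_w: "S \<subseteq> {..<4} \<Longrightarrow> card (w ` S) = card S"
  by (rule card_image) (meson inj_onI lessThan_iff subsetD w_inj)

lemma D_Hm: "Hm M v - v = L M 0 v *s w 0 + L M 1 v *s w 1 + L M 2 v *s w 2 + L M 3 v *s w 3"
  unfolding Hm_def by (simp del: vdiff add: add.assoc)

lemma range_sub: "vec.subspace (range (\<lambda>v. Hm M v - v))"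
proof (rule vec.subspaceI)
  show "0 \<in> range (\<lambda>v. Hm M v - v)" using Hm_scale[of M 0 0] by (intro range_eqI[of _ _ 0]) (simp del: vdiff)
next
  fix a b assume "a \<in> range (\<lambda>v. Hm M v - v)" "b \<in> range (\<lambda>v. Hm M v - v)"
  then obtain u v where "a = Hm M u - u" "b = Hm M v - v" by blast
  then show "a + b \<in> range (\<lambda>v. Hm M v - v)"
    by (intro range_eqI[of _ _ "u + v"]) (simp del: vdiff add: Hm_add algebra_simps)
next
  fix c a assume "a \<in> range (\<lambda>v. Hm M v - v)"
  then obtain u where "a = Hm M u - u" by blast
  then show "c *s a \<in> range (\<lambda>v. Hm M v - v)"
    by (intro range_eqI[of _ _ "c *s u"]) (simp del: vdiff add: Hm_scale vector_ssub_ldistrib)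
qed

lemma dickson_span:
  assumes "range (\<lambda>v. Hm M v - v) = vec.span (w ` S)" "S \<subseteq> {..<4}" "even (card S)"
  shows "dickson_invariant (Hm M) = 0"
  unfolding dickson_invariant_def assms(1)
  using vec.dim_span_eq_card_independent[OF indep[OF assms(2)]] card_w[OF assms(2)] assms(3) by simp

definition yv :: "'k \<Rightarrow> 'k \<Rightarrow> 'k \<Rightarrow> 'k \<Rightarrow> 'k^'i" where
  "yv a b c d = a *s y 0 + b *s y 1 + c *s y 2 + d *s y 3"

lemma xi_yv: "xi 0 (yv a b c d) = a" "xi 1 (yv a b c d) = b" "xi 2 (yv a b c d) = c" "xi 3 (yv a b c d) = d"
  unfolding yv_def by (simp_all add: B_addL B_scaleL)

lemma range_eq:
  assumes sub: "\<And>v. Hm M v - v \<in> vec.span (w ` S)" and cont: "\<And>k. k \<in> S \<Longrightarrow> w k \<in> range (\<lambda>v. Hm M v - v)"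
  shows "range (\<lambda>v. Hm M v - v) = vec.span (w ` S)"
proof
  show "range (\<lambda>v. Hm M v - v) \<subseteq> vec.span (w ` S)" using sub by blast
  show "vec.span (w ` S) \<subseteq> range (\<lambda>v. Hm M v - v)"
    by (rule vec.span_minimal) (use cont range_sub in auto)
qed

lemma dX: "dickson_invariant (Hm MX) = 0"
proof (rule dickson_span[of _ "{0,1}"])
  show "range (\<lambda>v. Hm MX v - v) = vec.span (w ` {0,1})"
  proof (rule range_eq)
    fix v show "Hm MX v - v \<in> vec.span (w ` {0, 1})"
      unfolding D_Hm LX by (simp del: One_nat_def) (intro vec.span_add vec.span_scale vec.span_base; auto)
  next
    fix k assume "k \<in> {0::nat,1}"
    then consider "k = 0" | "k = 1" by blast
    then show "w k \<in> range (\<lambda>v. Hm MX v - v)"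
    proof cases
      case 1 show ?thesis unfolding 1 by (rule range_eqI[of _ _ "yv 1 0 0 0"]) (simp del: vdiff One_nat_def add: D_Hm LX xi_yv)
    next
      case 2 show ?thesis unfolding 2 by (rule range_eqI[of _ _ "yv 0 1 0 0"]) (simp del: vdiff One_nat_def add: D_Hm LX xi_yv)
    qed
  qed
qed auto

lemma span4: "a *s w 0 + b *s w 1 + c *s w 2 + d *s w 3 \<in> vec.span (w ` {0,1,2,3})"
  by (intro vec.span_add vec.span_scale vec.span_base) auto

lemma dY: "dickson_invariant (Hm MY) = 0"
proof (rule dickson_span[of _ "{0,1,2,3}"])
  show "range (\<lambda>v. Hm MY v - v) = vec.span (w ` {0,1,2,3})"
  proof (rule range_eq)
    fix v show "Hm MY v - v \<in> vec.span (w ` {0,1,2,3})"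
      unfolding D_Hm by (rule span4)
  next
    fix k assume "k \<in> {0::nat,1,2,3}"
    then consider "k = 0" | "k = 1" | "k = 2" | "k = 3" by blast
    then show "w k \<in> range (\<lambda>v. Hm MY v - v)"
    proof cases
      case 1 show ?thesis unfolding 1 by (rule range_eqI[of _ _ "yv 1 1 0 1"]) (simp del: vdiff One_nat_def add: D_Hm LY xi_yv)
    next
      case 2 show ?thesis unfolding 2 by (rule range_eqI[of _ _ "yv 1 1 0 0"]) (simp del: vdiff One_nat_def add: D_Hm LY xi_yv)
    next
      case 3 show ?thesis unfolding 3 by (rule range_eqI[of _ _ "yv 0 0 1 0"]) (simp del: vdiff One_nat_def add: D_Hm LY xi_yv)
    next
      case 4 show ?thesis unfolding 4 by (rule range_eqI[of _ _ "yv 1 0 0 1"]) (simp del: vdiff One_nat_def add: D_Hm LY xi_yv)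
    qed
  qed
qed auto

lemma dXY: "dickson_invariant (Hm MXY) = 0"
proof (rule dickson_span[of _ "{0,1,2,3}"])
  show "range (\<lambda>v. Hm MXY v - v) = vec.span (w ` {0,1,2,3})"
  proof (rule range_eq)
    fix v show "Hm MXY v - v \<in> vec.span (w ` {0,1,2,3})"
      unfolding D_Hm by (rule span4)
  next
    fix k assume "k \<in> {0::nat,1,2,3}"
    then consider "k = 0" | "k = 1" | "k = 2" | "k = 3" by blast
    then show "w k \<in> range (\<lambda>v. Hm MXY v - v)"
    proof cases
      case 1 show ?thesis unfolding 1 by (rule range_eqI[of _ _ "yv 1 1 0 0"]) (simp del: vdiff One_nat_def add: D_Hm LXY xi_yv)
    next
      case 2 show ?thesis unfolding 2 by (rule range_eqI[of _ _ "yv 1 1 0 1"]) (simp del: vdiff One_nat_def add: D_Hm LXY xi_yv)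
    next
      case 3 show ?thesis unfolding 3 by (rule range_eqI[of _ _ "yv 0 0 1 0"]) (simp del: vdiff One_nat_def add: D_Hm LXY xi_yv)
    next
      case 4 show ?thesis unfolding 4 by (rule range_eqI[of _ _ "yv 0 1 0 1"]) (simp del: vdiff One_nat_def add: D_Hm LXY xi_yv)
    qed
  qed
qed auto

end



context QS4 begin

lemma Hm_Omega:
  assumes qp: "\<And>z. q (Hm M z) = q z" and d: "dickson_invariant (Hm M) = 0"
  shows "Hm M \<in> Omega_group q"
  unfolding Omega_group_def O_group_def Sp_group_def
  using Hm_linear Hm_bij qp d polar_pres[of "Hm M"] Hm_add by auto

lemma id_Omega: "id \<in> Omega_group q"
proof -
  have "range (\<lambda>v::'k^'i. id v - v) = {0}" by auto
  moreover have "vec.dim {0::'k^'i} = 0"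
    using vec.dim_le_card[of "{0::'k^'i}" "{}"] by simp
  ultimately have "dickson_invariant (id :: 'k^'i \<Rightarrow> 'k^'i) = 0"
    unfolding dickson_invariant_def by simp
  moreover have "Vector_Spaces.linear (*s) (*s) (id :: 'k^'i \<Rightarrow> 'k^'i)" by (rule vec.linear_id)
  ultimately show ?thesis unfolding Omega_group_def O_group_def Sp_group_def by auto
qed

lemma xi_scale: "xi k (c *s v) = c * xi k v" by (simp add: B_scaleL)

lemma Hm_p: "Hm M (c *s w 0) = c *s w 0"
  unfolding Hm_def L_def by (simp add: B_scaleL)

lemma not_split:
  fixes \<alpha> :: "'k^'i \<Rightarrow> 'k^'i \<Rightarrow> complex"
  assumes coc: "normalized_2cocycle \<alpha>" and om: "\<forall>v w. \<alpha> v w / \<alpha> w v = omega_q q v w"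
  shows "\<not> ext_splits q \<alpha> (Omega_group q)"
proof
  assume "ext_splits q \<alpha> (Omega_group q)"
  then obtain s where S1: "\<And>g. g \<in> Omega_group q \<Longrightarrow> s g \<in> APs q \<alpha> \<and> lies_over (s g) g"
    and S2: "\<And>g h. g \<in> Omega_group q \<Longrightarrow> h \<in> Omega_group q \<Longrightarrow> s (g \<circ> h) = s g \<circ> s h"
    unfolding ext_splits_def by blast
  have aut: "tw_algebra_aut \<alpha> (s g)" if "g \<in> Omega_group q" for g
    using S1[OF that] unfolding APs_def by blast
  have sid: "s id f = f" for f
  proof -
    have "s id = s id \<circ> s id" using S2[OF id_Omega id_Omega] by simp
    then have "s id (s id f) = s id f" by (metis comp_apply)
    moreover have "inj (s id)" using aut[OF id_Omega] unfolding tw_algebra_aut_def bij_def by blast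
    ultimately show ?thesis by (meson injD)
  qed
  have inv: "s g (s g f) = f" if "g \<in> Omega_group q" "g \<circ> g = id" for g f
    using S2[OF that(1) that(1)] that(2) sid by (metis comp_apply)
  obtain s0 :: 'k where s0: "abs_trace s0 \<noteq> 0" using abs_trace_nonzero[OF char2] by blast
  obtain t where t: "t^2 = s0" using sq_surj[OF char2] by blast
  define p where "p = t *s w 0"
  let ?e = "tw_basis p :: 'k^'i \<Rightarrow> complex"
  have vv: "\<And>v::'k^'i. v + v = 0" by simp
  have gen: "s g ?e = sc (-1) ?e"
    if g: "g \<in> Omega_group q" "g \<circ> g = id" "g = Hm M" and z: "Hm M z = z + p" "B z p = s0" for g M z
  proof -
    have hp: "g p = p" unfolding p_def g(3) by (rule Hm_p)
    have hw: "g z = z + p" using z g by simp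
    have hwp: "g (z + p) = z" using hw hp g(3) Hm_add by (simp add: add.assoc)
    have "s g ?e = sc (\<alpha> z p / \<alpha> p z) ?e"
      by (rule key_lift[OF vv coc aut[OF g(1)] _ inv[OF g(1,2)] hp hw hwp]) (use S1[OF g(1)] in blast)
    also have "\<alpha> z p / \<alpha> p z = omega_q q z p" using om by blast
    also have "\<dots> = -1" unfolding omega_q_def using z(2) s0 by simp
    finally show ?thesis .
  qed
  have mem: "Hm MX \<in> Omega_group q" "Hm MY \<in> Omega_group q" "Hm MXY \<in> Omega_group q"
    using Hm_Omega qX qY qXY dX dY dXY by auto
  have inv': "Hm M \<circ> Hm M = id" for M using Hm_invol by (simp add: fun_eq_iff)
  have comp: "Hm MX \<circ> Hm MY = Hm MXY"
    by (simp add: fun_eq_iff Hm_comp MXY_def[abs_def])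
  have Bz: "B (t *s yv a b c d) p = t^2 * a" for a b c d
    unfolding p_def by (simp add: B_scaleL B_scaleR xi_yv power2_eq_square)
  have eX: "s (Hm MX) ?e = sc (-1) ?e"
  proof (rule gen[OF mem(1) inv' refl])
    show "Hm MX (t *s yv 1 0 0 0) = t *s yv 1 0 0 0 + p"
      unfolding p_def Hm_def LX by (simp del: One_nat_def add: xi_scale xi_yv)
    show "B (t *s yv 1 0 0 0) p = s0" using Bz t by simp
  qed
  have eY: "s (Hm MY) ?e = sc (-1) ?e"
  proof (rule gen[OF mem(2) inv' refl])
    show "Hm MY (t *s yv 1 1 0 1) = t *s yv 1 1 0 1 + p"
      unfolding p_def Hm_def LY by (simp del: One_nat_def add: xi_scale xi_yv)
    show "B (t *s yv 1 1 0 1) p = s0" using Bz t by simp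
  qed
  have eXY: "s (Hm MXY) ?e = sc (-1) ?e"
  proof (rule gen[OF mem(3) inv' refl])
    show "Hm MXY (t *s yv 1 1 0 0) = t *s yv 1 1 0 0 + p"
      unfolding p_def Hm_def LXY by (simp del: One_nat_def add: xi_scale xi_yv)
    show "B (t *s yv 1 1 0 0) p = s0" using Bz t by simp
  qed
  have "s (Hm MXY) ?e = s (Hm MX) (s (Hm MY) ?e)"
    using S2[OF mem(1) mem(2)] comp by simp
  also have "\<dots> = sc (-1) (s (Hm MX) ?e)" using eY aut_sc[OF aut[OF mem(1)], of "-1" ?e] by simp
  also have "\<dots> = ?e" using eX by simp
  finally have "?e p = - ?e p" using eXY by (metis mult_minus1)
  then show False by (simp add: tw_basis_def)
qed

end

lemma ext_splits_mono: "ext_splits q \<alpha> G \<Longrightarrow> H \<subseteq> G \<Longrightarrow> ext_splits q \<alpha> H"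
  unfolding ext_splits_def by (metis subsetD)

theorem proposition5p3:
  fixes q :: "'k::{field,finite} ^ 'i::finite \<Rightarrow> 'k"
    and \<alpha> :: "'k ^ 'i \<Rightarrow> 'k ^ 'i \<Rightarrow> complex"
    and n :: nat
  assumes "CHAR('k) = 2"
    and "vec.dim (UNIV :: ('k ^ 'i) set) = 2 * n" and "n \<ge> 4"
    and "is_quadratic_form q" and "nondegenerate_polar q"
    and "normalized_2cocycle \<alpha>"
    and "\<forall>v w. \<alpha> v w / \<alpha> w v = omega_q q v w"
  shows "\<not> ext_splits q \<alpha> (Sp_group q) \<and> \<not> ext_splits q \<alpha> (O_group q)
       \<and> \<not> ext_splits q \<alpha> (Omega_group q)"
proof -
  interpret QS q by (rule QS.intro) (rule assms)+
  have dim8: "8 \<le> vec.dim (UNIV :: ('k ^ 'i) set)" using assms(2,3) by simp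
  obtain w y :: "nat \<Rightarrow> 'k^'i" where H: "\<forall>a<4. q (w a) = 1" "\<forall>a<4. \<forall>b<4. polar q (w a) (w b) = 0"
     "\<forall>a<4. \<forall>b<4. polar q (y a) (y b) = 0" "\<forall>a<4. \<forall>b<4. polar q (w a) (y b) = (if a = b then 1 else 0)"
    using build[OF dim8, of 4] by auto
  interpret QS4 q w y using H by unfold_locales
  have nO: "\<not> ext_splits q \<alpha> (Omega_group q)" by (rule not_split[OF assms(6,7)])
  have s1: "Omega_group q \<subseteq> O_group q" unfolding Omega_group_def by auto
  have s2: "O_group q \<subseteq> Sp_group q" unfolding O_group_def by auto
  have nOO: "\<not> ext_splits q \<alpha> (O_group q)" using nO ext_splits_mono[OF _ s1] by blast
  have nSp: "\<not> ext_splits q \<alpha> (Sp_group q)" using nOO ext_splits_mono[OF _ s2] by blast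
  show ?thesis using nO nOO nSp by blast
qed

end
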